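(* For either choice $\zeta\in\{q,-q^3\}$, the function $\bar{\mathcal{F}}(v_1,v_2\mid\lambda_1,\dots,\lambda_{L-1})=\langle\bar0|\mathcal{B}(v_2)\mathcal{B}(v_1)\mathcal{E}(\lambda_{L-1})\cdots\mathcal{E}(\lambda_1)|0\rangle$ can be written as $\bar{\mathcal{F}}(v_1,v_2\mid\lambda_1,\dots,\lambda_{L-1})=\bar\omega(y_2)\,\bar{\mathcal{H}}(v_1,v_2\mid\lambda_1,\dots,\lambda_{L-1})$ with $y_2=e^{2v_2}$, $\bar\omega(y)=\prod_{j=1}^L(y-e^{2\mu_j})$, where $\bar{\mathcal{H}}$ is a polynomial of degree $L-1$ in the variable $y_2$.
   Context: Let $q\in\mathbb{C}\setminus\{0\}$ (with a fixed choice of $q^{1/2}$) and $\zeta\in\{q,-q^3\}$ ($\zeta=q$: Fateev–Zamolodchikov model; $\zeta=-q^3$: Izergin–Korepin model). For $\lambda\in\mathbb{C}$ put $x=e^{2\lambda}$ and define $a(\lambda)=(x-\zeta)(x-q^2)$, $b(\lambda)=q(x-1)(x-\zeta)$, $c(\lambda)=(1-q^2)(x-\zeta)$, $\bar c(\lambda)=x(1-q^2)(x-\zeta)$, and for $\alpha,\beta\in\{1,2,3\}$, with $\beta'=4-\beta$: $d_{\alpha,\beta}(\lambda)=q(x-1)(x-\zeta)+x(q^2-1)(\zeta-1)$ if $\alpha=\beta=2$; $d_{\alpha,\beta}(\lambda)=(x-1)[(x-\zeta)+x(q^2-1)]$ if $\alpha=\beta\neq 2$; $d_{\alpha,\beta}(\lambda)=(q^2-1)[\zeta(x-1)q^{(\alpha-\beta)/2}-\delta_{\alpha,\beta'}(x-\zeta)]$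 if $\alpha<\beta$; $d_{\alpha,\beta}(\lambda)=x(q^2-1)[(x-1)q^{(\alpha-\beta)/2}-\delta_{\alpha,\beta'}(x-\zeta)]$ if $\alpha>\beta$. Let $e_1,e_2,e_3$ be the standard basis of $\mathbb{C}^3$ and $E_{\alpha,\beta}$ the unit matrices. Define $\mathcal{R}(\lambda)\in\mathrm{End}(\mathbb{C}^3\otimes\mathbb{C}^3)$ as the $9\times 9$ matrix in the ordered basis $e_1\otimes e_1,e_1\otimes e_2,e_1\otimes e_3,e_2\otimes e_1,e_2\otimes e_2,e_2\otimes e_3,e_3\otimes e_1,e_3\otimes e_2,e_3\otimes e_3$ (indices $1,\dots,9$) whose only nonzero entries (row, column) are: $(1,1)=a$; $(2,2)=b$, $(2,4)=c$; $(3,3)=d_{1,1}$, $(3,5)=d_{1,2}$, $(3,7)=d_{1,3}$; $(4,2)=\bar c$, $(4,4)=b$; $(5,3)=d_{2,1}$, $(5,5)=d_{2,2}$, $(5,7)=d_{2,3}$; $(6,6)=b$, $(6,8)=c$; $(7,3)=d_{3,1}$, $(7,5)=d_{3,2}$, $(7,7)=d_{3,3}$; $(8,6)=\bar c$, $(8,8)=b$; $(9,9)=a$ (all evaluated at $\lambda$). Fix $L\ge1$ and inhomogeneities $\mu_1,\dots,\mu_L\in\mathbb{C}$. With $V_a=V_1=\dots=V_L=\mathbb{C}^3$, let $\mathcal{T}(\lambda)=\mathcal{R}_{a1}(\lambda-\mu_1)\cdots\mathcal{R}_{aL}(\lambda-\mu_L)$, where $\mathcal{R}_{aj}$ acts as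 $\mathcal{R}$ on $V_a\otimes V_j$. Write $\mathcal{T}(\lambda)=\sum_{\alpha,\beta}E_{\alpha,\beta}\otimes\mathcal{T}_\alpha^\beta(\lambda)$ and set $\mathcal{B}(\lambda)=\mathcal{T}_1^2(\lambda)$, $\mathcal{E}(\lambda)=\mathcal{T}_1^3(\lambda)$, operators on $V_1\otimes\cdots\otimes V_L$. Let $|0\rangle=e_1^{\otimes L}$ and let $\langle\bar0|$ be the dual vector of $e_3^{\otimes L}$. *)

theory Defs
  imports Complex_Main "HOL-Computational_Algebra.Polynomial"
begin

text \<open>Parameters: q (nonzero), s = chosen square root of q (s^2 = q), z = zeta.
  x stands for e^{2 lambda}.  Auxiliary/quantum space indices range over {1,2,3}.\<close>

definition Ra :: "complex \<Rightarrow> complex \<Rightarrow> complex \<Rightarrow> complex" where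
  "Ra q z x = (x - z) * (x - q^2)"
definition Rb :: "complex \<Rightarrow> complex \<Rightarrow> complex \<Rightarrow> complex" where
  "Rb q z x = q * (x - 1) * (x - z)"
definition Rc :: "complex \<Rightarrow> complex \<Rightarrow> complex \<Rightarrow> complex" where
  "Rc q z x = (1 - q^2) * (x - z)"
definition Rcbar :: "complex \<Rightarrow> complex \<Rightarrow> complex \<Rightarrow> complex" where
  "Rcbar q z x = x * (1 - q^2) * (x - z)"

definition Rd :: "complex \<Rightarrow> complex \<Rightarrow> complex \<Rightarrow> complex \<Rightarrow> nat \<Rightarrow> nat \<Rightarrow> complex" where
  "Rd q s z x \<alpha> \<beta> =
     (if \<alpha> = 2 \<and> \<beta> = 2 then q * (x - 1) * (x - z) + x * (q^2 - 1) * (z - 1)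
      else if \<alpha> = \<beta> then (x - 1) * ((x - z) + x * (q^2 - 1))
      else if \<alpha> < \<beta> then (q^2 - 1) * (z * (x - 1) * s powi (int \<alpha> - int \<beta>)
                                 - (if \<alpha> + \<beta> = 4 then x - z else 0))
      else x * (q^2 - 1) * ((x - 1) * s powi (int \<alpha> - int \<beta>)
                                 - (if \<alpha> + \<beta> = 4 then x - z else 0)))"

definition Rmat :: "complex \<Rightarrow> complex \<Rightarrow> complex \<Rightarrow> complex \<Rightarrow> nat \<Rightarrow> nat \<Rightarrow> complex" where
  "Rmat q s z lam r c =
     (let x = exp (2 * lam) in
      if (r, c) = (1, 1) \<or> (r, c) = (9, 9) then Ra q z x
      else if (r, c) = (2, 2) \<or> (r, c) = (4, 4) \<or> (r, c) = (6, 6) \<or> (r, c) = (8, 8) then Rb q z x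
      else if (r, c) = (2, 4) \<or> (r, c) = (6, 8) then Rc q z x
      else if (r, c) = (4, 2) \<or> (r, c) = (8, 6) then Rcbar q z x
      else if r \<in> {3, 5, 7} \<and> c \<in> {3, 5, 7} then Rd q s z x ((r - 1) div 2) ((c - 1) div 2)
      else 0)"

text \<open>Entry of R on V_a \<otimes> V_j: row e_\<alpha> \<otimes> e_i, column e_\<beta> \<otimes> e_j.\<close>
definition Rent :: "complex \<Rightarrow> complex \<Rightarrow> complex \<Rightarrow> complex \<Rightarrow> nat \<Rightarrow> nat \<Rightarrow> nat \<Rightarrow> nat \<Rightarrow> complex" where
  "Rent q s z lam \<alpha> i \<beta> j = Rmat q s z lam (3 * (\<alpha> - 1) + i) (3 * (\<beta> - 1) + j)"

text \<open>Matrix element <is| T_\<alpha>^\<beta>(lam) |js> of the monodromy matrix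
  R_{a1}(lam - mu_1) ... R_{aL}(lam - mu_L), with mus = [mu_1, ..., mu_L].\<close>
fun mono :: "complex \<Rightarrow> complex \<Rightarrow> complex \<Rightarrow> complex \<Rightarrow> complex list \<Rightarrow> nat \<Rightarrow> nat
             \<Rightarrow> nat list \<Rightarrow> nat list \<Rightarrow> complex" where
  "mono q s z lam [] \<alpha> \<beta> is js = (if \<alpha> = \<beta> \<and> is = [] \<and> js = [] then 1 else 0)"
| "mono q s z lam (mu # mus) \<alpha> \<beta> (i # is) (j # js) =
     (\<Sum>\<gamma>\<in>{1..3}. Rent q s z (lam - mu) \<alpha> i \<gamma> j * mono q s z lam mus \<gamma> \<beta> is js)"
| "mono q s z lam (mu # mus) \<alpha> \<beta> _ _ = 0"

text \<open>Basis labels of V_1 \<otimes> ... \<otimes> V_L.\<close>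
definition states :: "nat \<Rightarrow> nat list set" where
  "states L = {js. length js = L \<and> set js \<subseteq> {1, 2, 3}}"

definition applyOp :: "nat \<Rightarrow> (nat list \<Rightarrow> nat list \<Rightarrow> complex) \<Rightarrow> (nat list \<Rightarrow> complex)
                        \<Rightarrow> nat list \<Rightarrow> complex" where
  "applyOp L A v = (\<lambda>is. \<Sum>js\<in>states L. A is js * v js)"

definition mus :: "nat \<Rightarrow> (nat \<Rightarrow> complex) \<Rightarrow> complex list" where
  "mus L mu = map mu [1..<L + 1]"

definition Bop :: "complex \<Rightarrow> complex \<Rightarrow> complex \<Rightarrow> nat \<Rightarrow> (nat \<Rightarrow> complex) \<Rightarrow> complex
                    \<Rightarrow> nat list \<Rightarrow> nat list \<Rightarrow> complex" where
  "Bop q s z L mu lam = mono q s z lam (mus L mu) 1 2"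

definition Eop :: "complex \<Rightarrow> complex \<Rightarrow> complex \<Rightarrow> nat \<Rightarrow> (nat \<Rightarrow> complex) \<Rightarrow> complex
                    \<Rightarrow> nat list \<Rightarrow> nat list \<Rightarrow> complex" where
  "Eop q s z L mu lam = mono q s z lam (mus L mu) 1 3"

definition vac :: "nat \<Rightarrow> nat list \<Rightarrow> complex" where
  "vac L = (\<lambda>js. if js = replicate L 1 then 1 else 0)"

definition Fbar :: "complex \<Rightarrow> complex \<Rightarrow> complex \<Rightarrow> nat \<Rightarrow> (nat \<Rightarrow> complex)
                    \<Rightarrow> complex \<Rightarrow> complex \<Rightarrow> (nat \<Rightarrow> complex) \<Rightarrow> complex" where
  "Fbar q s z L mu v1 v2 lam =
     (let w = fold (\<lambda>k w. applyOp L (Eop q s z L mu (lam k)) w) [1..<L] (vac L);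
          w' = applyOp L (Bop q s z L mu v2) (applyOp L (Bop q s z L mu v1) w)
      in w' (replicate L 3))"

definition omegabar :: "nat \<Rightarrow> (nat \<Rightarrow> complex) \<Rightarrow> complex \<Rightarrow> complex" where
  "omegabar L mu y = (\<Prod>j=1..L. (y - exp (2 * mu j)))"

end

theory Submission
  imports Defs
begin

lemma Rmat9: "Rmat q s z lam 9 c = (if c = 9 then Ra q z (exp (2*lam)) else 0)"
  by (simp add: Rmat_def Let_def)

lemma Rmat6: "Rmat q s z lam 6 c = (if c = 6 then Rb q z (exp (2*lam))
   else if c = 8 then Rc q z (exp (2*lam)) else 0)"
  by (auto simp add: Rmat_def Let_def)

lemma Rmat3: "Rmat q s z lam 3 c = (if c = 3 then Rd q s z (exp (2*lam)) 1 1
   else if c = 5 then Rd q s z (exp (2*lam)) 1 2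
   else if c = 7 then Rd q s z (exp (2*lam)) 1 3 else 0)"
  by (auto simp add: Rmat_def Let_def)

lemma set3: "{1..3::nat} = {1,2,3}" by auto

lemma expx: "exp (2 * (lam - mu)) = exp (2*lam) / exp (2*(mu::complex))"
  by (simp add: right_diff_distrib exp_diff)

lemma zero3: "set js \<subseteq> {1,2,3} \<Longrightarrow>
  mono q s z lam ms 3 2 (replicate (length ms) 3) js = 0"
proof (induction ms arbitrary: js)
  case Nil
  then show ?case by simp
next
  case (Cons m ms)
  show ?case
  proof (cases js)
    case Nil
    then show ?thesis by simp
  next
    case (Cons j js')
    then have j: "j \<in> {1,2,3}" and js': "set js' \<subseteq> {1,2,3}" using Cons.prems by auto
    have "mono q s z lam (m # ms) 3 2 (replicate (length (m # ms)) 3) js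
      = (\<Sum>\<gamma>\<in>{1..3}. Rent q s z (lam - m) 3 3 \<gamma> j * mono q s z lam ms \<gamma> 2 (replicate (length ms) 3) js')"
      using Cons by simp
    also have "\<dots> = 0" using j Cons.IH[OF js'] by (simp only: set3) (elim insertE emptyE; simp add: Rent_def Rmat9)
    finally show ?thesis .
  qed
qed

lemma two: "set js \<subseteq> {1,2,3} \<Longrightarrow>
  \<exists>P. degree P \<le> length ms \<and> (\<forall>lam. mono q s z lam ms 2 2 (replicate (length ms) 3) js
     = (\<Prod>m\<leftarrow>ms. exp (2*lam) / exp (2*m) - 1) * poly P (exp (2*lam)))"
proof (induction ms arbitrary: js)
  case Nil
  show ?case
  proof (cases js)
    case Nil
    then show ?thesis by (intro exI[of _ 1]) simp
  next
    case (Cons a list)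
    then show ?thesis by (intro exI[of _ 0]) simp
  qed
next
  case (Cons m ms)
  show ?case
  proof (cases js)
    case Nil
    then show ?thesis by (intro exI[of _ 0]) simp
  next
    case (Cons j js')
    then have j: "j \<in> {1,2,3}" and js': "set js' \<subseteq> {1,2,3}" using Cons.prems by auto
    obtain P where dP: "degree P \<le> length ms" and P: "\<And>lam. mono q s z lam ms 2 2 (replicate (length ms) 3) js'
     = (\<Prod>m\<leftarrow>ms. exp (2*lam) / exp (2*m) - 1) * poly P (exp (2*lam))"
      using Cons.IH[OF js'] by blast
    have eq: "mono q s z lam (m # ms) 2 2 (replicate (length (m # ms)) 3) js
      = (if j = 3 then Rb q z (exp (2*(lam - m))) * mono q s z lam ms 2 2 (replicate (length ms) 3) js' else 0)" for lam
    proof -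
      have "mono q s z lam (m # ms) 2 2 (replicate (length (m # ms)) 3) js
      = (\<Sum>\<gamma>\<in>{1..3}. Rent q s z (lam - m) 2 3 \<gamma> j * mono q s z lam ms \<gamma> 2 (replicate (length ms) 3) js')"
        using Cons by simp
      also have "\<dots> = (if j = 3 then Rb q z (exp (2*(lam - m))) * mono q s z lam ms 2 2 (replicate (length ms) 3) js' else 0)"
        using j zero3[OF js'] by (simp only: set3) (elim insertE emptyE; simp add: Rent_def Rmat6)
      finally show ?thesis .
    qed
    show ?thesis
    proof (cases "j = 3")
      case True
      show ?thesis
      proof (intro exI[of _ "smult q [:-z, 1 / exp (2*m):] * P"] conjI allI)
        show "degree (smult q [:- z, 1 / exp (2 * m):] * P) \<le> length (m # ms)"
        proof -
          have d1: "degree (smult q [:- z, 1 / exp (2 * m):]) \<le> 1"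
            by (rule order.trans[OF degree_smult_le]) (simp add: degree_pCons_eq_if)
          show ?thesis using dP d1 degree_mult_le[of "smult q [:- z, 1 / exp (2 * m):]" P] by simp
        qed
      next
        fix lam
        show "mono q s z lam (m # ms) 2 2 (replicate (length (m # ms)) 3) js =
         (\<Prod>m\<leftarrow>m # ms. exp (2 * lam) / exp (2 * m) - 1) * poly (smult q [:- z, 1 / exp (2 * m):] * P) (exp (2 * lam))"
          unfolding eq expx P using True by (simp add: Rb_def field_simps)
      qed
    next
      case False
      then show ?thesis using eq by (intro exI[of _ 0]) simp
    qed
  qed
qed


lemma Rd11: "Rd q s z x 1 1 = (x - 1) * (q^2 * x - z)"
  by (simp add: Rd_def algebra_simps)

lemma Rd12: "Rd q s z x 1 2 = (x - 1) * ((q^2 - 1) * z * s powi (-1))"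
  by (simp add: Rd_def algebra_simps)

lemma one: "set js \<subseteq> {1,2,3} \<Longrightarrow>
  \<exists>P. degree P \<le> length ms - 1 \<and> (\<forall>lam. mono q s z lam ms 1 2 (replicate (length ms) 3) js
     = (\<Prod>m\<leftarrow>ms. exp (2*lam) / exp (2*m) - 1) * poly P (exp (2*lam)))"
proof (induction ms arbitrary: js)
  case Nil
  show ?case by (intro exI[of _ 0]) simp
next
  case (Cons m ms)
  show ?case
  proof (cases js)
    case Nil
    then show ?thesis by (intro exI[of _ 0]) simp
  next
    case (Cons j js')
    then have j: "j \<in> {1,2,3}" and js': "set js' \<subseteq> {1,2,3}" using Cons.prems by auto
    obtain P where dP: "degree P \<le> length ms - 1" and P: "\<And>lam. mono q s z lam ms 1 2 (replicate (length ms) 3) js'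
     = (\<Prod>m\<leftarrow>ms. exp (2*lam) / exp (2*m) - 1) * poly P (exp (2*lam))"
      using Cons.IH[OF js'] by blast
    obtain P2 where dP2: "degree P2 \<le> length ms" and P2: "\<And>lam. mono q s z lam ms 2 2 (replicate (length ms) 3) js'
     = (\<Prod>m\<leftarrow>ms. exp (2*lam) / exp (2*m) - 1) * poly P2 (exp (2*lam))"
      using two[OF js'] by blast
    have eq: "mono q s z lam (m # ms) 1 2 (replicate (length (m # ms)) 3) js
      = (if j = 3 then Rd q s z (exp (2*(lam - m))) 1 1 * mono q s z lam ms 1 2 (replicate (length ms) 3) js'
         else if j = 2 then Rd q s z (exp (2*(lam - m))) 1 2 * mono q s z lam ms 2 2 (replicate (length ms) 3) js'
         else 0)" for lam
    proof -
      have "mono q s z lam (m # ms) 1 2 (replicate (length (m # ms)) 3) js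
      = (\<Sum>\<gamma>\<in>{1..3}. Rent q s z (lam - m) 1 3 \<gamma> j * mono q s z lam ms \<gamma> 2 (replicate (length ms) 3) js')"
        using Cons by simp
      also have "\<dots> = (if j = 3 then Rd q s z (exp (2*(lam - m))) 1 1 * mono q s z lam ms 1 2 (replicate (length ms) 3) js'
         else if j = 2 then Rd q s z (exp (2*(lam - m))) 1 2 * mono q s z lam ms 2 2 (replicate (length ms) 3) js'
         else 0)"
        using j zero3[OF js'] by (simp only: set3) (elim insertE emptyE; simp add: Rent_def Rmat3)
      finally show ?thesis .
    qed
    show ?thesis
    proof (cases "j = 3")
      case True
      show ?thesis
      proof (cases ms)
        case Nil
        show ?thesis using True by (intro exI[of _ 0] conjI allI; simp only: eq; simp add: Nil)
      next
        case (Cons m' ms')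
      show ?thesis
      proof (intro exI[of _ "[:-z, q^2 / exp (2*m):] * P"] conjI allI)
        show "degree ([:-z, q^2 / exp (2*m):] * P) \<le> length (m # ms) - 1"
        proof -
          have d1: "degree ([:-z, q^2 / exp (2*m):]) \<le> 1"
            by (simp add: degree_pCons_eq_if)
          show ?thesis using dP d1 degree_mult_le[of "[:-z, q^2 / exp (2*m):]" P] Cons by simp
        qed
      next
        fix lam
        show "mono q s z lam (m # ms) 1 2 (replicate (length (m # ms)) 3) js =
         (\<Prod>m\<leftarrow>m # ms. exp (2 * lam) / exp (2 * m) - 1) * poly ([:-z, q^2 / exp (2*m):] * P) (exp (2 * lam))"
          unfolding eq expx P Rd11 using True by (simp add: field_simps)
      qed
      qed
    next
      case False
      show ?thesis
      proof (cases "j = 2")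
        case True
        show ?thesis
        proof (intro exI[of _ "smult ((q^2 - 1) * z * s powi (-1)) P2"] conjI allI)
          show "degree (smult ((q^2 - 1) * z * s powi (-1)) P2) \<le> length (m # ms) - 1"
            using dP2 degree_smult_le[of "(q^2 - 1) * z * s powi (-1)" P2] by simp
        next
          fix lam
          show "mono q s z lam (m # ms) 1 2 (replicate (length (m # ms)) 3) js =
           (\<Prod>m\<leftarrow>m # ms. exp (2 * lam) / exp (2 * m) - 1) * poly (smult ((q^2 - 1) * z * s powi (-1)) P2) (exp (2 * lam))"
            unfolding eq expx P2 Rd12 using True by (simp add: field_simps)
        qed
      next
        case False
        then show ?thesis using eq \<open>j \<noteq> 3\<close> by (intro exI[of _ 0]) simp
      qed
    qed
  qed
qed


lemma prod_mus: "(\<Prod>m\<leftarrow>mus L mu. Y / exp (2*m) - 1)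
   = (\<Prod>j=1..L. 1 / exp (2 * mu j)) * omegabar L mu Y"
proof -
  have "(\<Prod>m\<leftarrow>mus L mu. Y / exp (2*m) - 1) = (\<Prod>j\<leftarrow>[1..<L+1]. Y / exp (2*mu j) - 1)"
    by (simp add: mus_def comp_def)
  also have "\<dots> = (\<Prod>j\<in>{1..L}. Y / exp (2*mu j) - 1)"
  proof -
    have st: "set [1..<L+1] = {1..L}" by auto
    show ?thesis by (subst prod.distinct_set_conv_list[symmetric]) (simp_all only: st distinct_upt)
  qed
  also have "\<dots> = (\<Prod>j\<in>{1..L}. (1 / exp (2 * mu j)) * (Y - exp (2 * mu j)))"
    by (rule prod.cong) (auto simp: field_simps)
  also have "\<dots> = (\<Prod>j=1..L. 1 / exp (2 * mu j)) * omegabar L mu Y"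
    by (simp only: prod.distrib omegabar_def)
  finally show ?thesis .
qed

theorem corollary2p6:
  fixes q s z :: complex and L :: nat and mu lam :: "nat \<Rightarrow> complex" and v1 :: complex
  assumes "q \<noteq> 0" and "s ^ 2 = q" and "z = q \<or> z = - (q ^ 3)" and "L \<ge> 1"
  shows "\<exists>p :: complex poly. degree p \<le> L - 1 \<and>
           (\<forall>v2. Fbar q s z L mu v1 v2 lam
                   = omegabar L mu (exp (2 * v2)) * poly p (exp (2 * v2)))"
proof -
  define W where "W = applyOp L (Bop q s z L mu v1)
     (fold (\<lambda>k w. applyOp L (Eop q s z L mu (lam k)) w) [1..<L] (vac L))"
  define C where "C = (\<Prod>j=1..L. 1 / exp (2 * mu j))"
  have len: "length (mus L mu) = L" by (simp add: mus_def)
  have fin: "finite (states L)"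
    unfolding states_def using finite_lists_length_eq[of "{1,2,3::nat}" L] by (simp add: conj_commute)
  have "\<forall>js\<in>states L. \<exists>P. degree P \<le> L - 1 \<and> (\<forall>v. mono q s z v (mus L mu) 1 2 (replicate L 3) js
     = (\<Prod>m\<leftarrow>mus L mu. exp (2*v) / exp (2*m) - 1) * poly P (exp (2*v)))"
    using one[of _ "mus L mu" q s z] len by (auto simp: states_def)
  then obtain PP where PP: "\<And>js. js \<in> states L \<Longrightarrow> degree (PP js) \<le> L - 1"
    "\<And>js v. js \<in> states L \<Longrightarrow> mono q s z v (mus L mu) 1 2 (replicate L 3) js
     = (\<Prod>m\<leftarrow>mus L mu. exp (2*v) / exp (2*m) - 1) * poly (PP js) (exp (2*v))"
    by metis
  show ?thesis
  proof (intro exI[of _ "smult C (\<Sum>js\<in>states L. smult (W js) (PP js))"] conjI allI)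
    show "degree (smult C (\<Sum>js\<in>states L. smult (W js) (PP js))) \<le> L - 1"
      by (rule order.trans[OF degree_smult_le], rule degree_sum_le[OF fin],
          rule order.trans[OF degree_smult_le], rule PP(1))
    fix v2
    have "Fbar q s z L mu v1 v2 lam = (\<Sum>js\<in>states L. mono q s z v2 (mus L mu) 1 2 (replicate L 3) js * W js)"
      by (simp add: Fbar_def W_def applyOp_def Bop_def)
    also have "\<dots> = (\<Sum>js\<in>states L. C * omegabar L mu (exp (2 * v2)) * (W js * poly (PP js) (exp (2*v2))))"
    proof (rule sum.cong[OF refl])
      fix js assume "js \<in> states L"
      show "mono q s z v2 (mus L mu) 1 2 (replicate L 3) js * W js
         = C * omegabar L mu (exp (2 * v2)) * (W js * poly (PP js) (exp (2*v2)))"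
        unfolding PP(2)[OF \<open>js \<in> states L\<close>] prod_mus C_def by (simp add: mult_ac)
    qed
    also have "\<dots> = omegabar L mu (exp (2 * v2)) * poly (smult C (\<Sum>js\<in>states L. smult (W js) (PP js))) (exp (2 * v2))"
      by (simp add: poly_sum sum_distrib_left mult_ac)
    finally show "Fbar q s z L mu v1 v2 lam = omegabar L mu (exp (2 * v2)) * poly (smult C (\<Sum>js\<in>states L. smult (W js) (PP js))) (exp (2 * v2))" .
  qed
qed

end
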